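(* Assume the setting of the context. Then for all sufficiently small $\epsilon>0$ there exist numbers $0<\widetilde{x}_-<\widetilde{x}_+$, depending only on $C_0,C_2,C_3,\epsilon$ (and the chosen function $\lambda$), such that for every $\sigma\in\Sigma$ $$x\in[\widetilde{x}_-,\widetilde{x}_+]\quad\Longrightarrow\quad Q^\epsilon_\sigma\cdot(D_{\kappa_\sigma}\cdot x)\;\le\;\Lambda\,(D_{\kappa_\sigma}\cdot x),$$ and moreover $$\lim_{\epsilon\to0}\frac{\lambda\,\widetilde{x}_-}{\epsilon}=\frac{C_2e^{2C_0}}{2C_0},\qquad\lim_{\epsilon\to0}\frac{\epsilon\,\widetilde{x}_+}{\lambda}=\frac{2C_0}{C_2e^{2C_0}}.$$
   Context: Let $(\Sigma,\mathbf{p})$ be a probability space. For each $\sigma\in\Sigma$ and $\epsilon\in[-1,1]$ let real numbers $a_\sigma,b_\sigma$, $\kappa_\sigma>0$ and $\alpha^\epsilon_\sigma,\beta^\epsilon_\sigma,\gamma^\epsilon_\sigma,\delta^\epsilon_\sigma$ be given, with $A^\epsilon_\sigma=\begin{pmatrix}\alpha^\epsilon_\sigma&\beta^\epsilon_\sigma\\ \gamma^\epsilon_\sigma&\delta^\epsilon_\sigma\end{pmatrix}$. Assume that for all $\sigma$: $|\log(\kappa_\sigma)|\le C_0$, $a_\sigma-|b_\sigma|\ge C_1$, $a_\sigma+|b_\sigma|\le C_2$, and $\|A^\epsilon_\sigma\|\le C_3$ for $|\epsilon|\le1$, with constants $C_0,C_1,C_2,C_3\in(0,\infty)$. On $\mathbb{R}\cup\{\infty\}$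 define $D_{\kappa}\cdot x=\kappa^2x$ and $$Q^\epsilon_\sigma\cdot x=\frac{(1+\epsilon^2\alpha^\epsilon_\sigma)x+(a_\sigma-b_\sigma-\epsilon\beta^\epsilon_\sigma)\epsilon}{1+\epsilon^2\delta^\epsilon_\sigma-(a_\sigma+b_\sigma+\epsilon\gamma^\epsilon_\sigma)\epsilon x}.$$ Let $\lambda=\lambda(\epsilon)>0$ be a function of $\epsilon>0$ with $\lim_{\epsilon\to0}\lambda=0$ and $\lim_{\epsilon\to0}\frac{\log(\lambda)}{\log(\epsilon)}=0$ (hence also $\epsilon/\lambda\to0$), and set $\Lambda=e^{2C_0\lambda}$. *)

theory Defs
  imports "HOL-Analysis.Analysis"
begin

definition mat2 :: "real \<Rightarrow> real \<Rightarrow> real \<Rightarrow> real \<Rightarrow> real^2^2" where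
  "mat2 p q r s = (\<chi> i j. if i = 1 then (if j = 1 then p else q) else (if j = 1 then r else s))"

definition mnorm :: "real^2^2 \<Rightarrow> real" where
  "mnorm A = onorm (\<lambda>v. A *v v)"

definition mobius :: "real \<Rightarrow> real \<Rightarrow> real \<Rightarrow> real \<Rightarrow> real \<Rightarrow> ereal" where
  "mobius p q r s x = (if r * x + s = 0 then PInfty else ereal ((p * x + q) / (r * x + s)))"

definition Dact :: "real \<Rightarrow> real \<Rightarrow> real" where
  "Dact k x = k^2 * x"

definition Qact :: "real \<Rightarrow> real \<Rightarrow> real \<Rightarrow> real \<Rightarrow> real \<Rightarrow> real \<Rightarrow> real \<Rightarrow> real \<Rightarrow> ereal" where
  "Qact a b al be ga de e x =
     mobius (1 + e^2 * al) ((a - b - e * be) * e) (- ((a + b + e * ga) * e)) (1 + e^2 * de) x"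

end

theory Submission
  imports Defs
begin

lemma entry_le_mnorm: "\<bar>A $ i $ j\<bar> \<le> mnorm A"
proof -
  have "\<bar>A $ i $ j\<bar> = \<bar>(A *v axis j 1) $ i\<bar>"
    by (simp add: matrix_vector_mult_basis column_def)
  also have "\<dots> \<le> norm (A *v axis j 1)" by (rule component_le_norm_cart)
  also have "\<dots> \<le> onorm (\<lambda>v. A *v v) * norm (axis j (1::real))"
    by (rule onorm) simp
  finally show ?thesis by (simp add: mnorm_def)
qed

lemma mat2_entries:
  "\<bar>p\<bar> \<le> mnorm (mat2 p q r s)" "\<bar>q\<bar> \<le> mnorm (mat2 p q r s)"
  "\<bar>r\<bar> \<le> mnorm (mat2 p q r s)" "\<bar>s\<bar> \<le> mnorm (mat2 p q r s)"
proof -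
  have ne: "(2::2) \<noteq> 1" by simp
  show "\<bar>p\<bar> \<le> mnorm (mat2 p q r s)"
    using entry_le_mnorm[of "mat2 p q r s" 1 1] by (simp add: mat2_def)
  show "\<bar>q\<bar> \<le> mnorm (mat2 p q r s)"
    using entry_le_mnorm[of "mat2 p q r s" 1 2] ne by (simp add: mat2_def)
  show "\<bar>r\<bar> \<le> mnorm (mat2 p q r s)"
    using entry_le_mnorm[of "mat2 p q r s" 2 1] ne by (simp add: mat2_def)
  show "\<bar>s\<bar> \<le> mnorm (mat2 p q r s)"
    using entry_le_mnorm[of "mat2 p q r s" 2 2] ne by (simp add: mat2_def)
qed

lemma e_over_lam:
  fixes lam :: "real \<Rightarrow> real"
  assumes "\<forall>e>0. lam e > 0"
    and "((\<lambda>e. ln (lam e) / ln e) \<longlongrightarrow> 0) (at_right 0)"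
  shows "((\<lambda>e. e / lam e) \<longlongrightarrow> 0) (at_right 0)"
proof -
  have "((\<lambda>e. 1 - ln (lam e) / ln e) \<longlongrightarrow> 1 - 0) (at_right 0)"
    by (intro tendsto_intros assms(2))
  then have "LIM e at_right 0. (1 - ln (lam e) / ln e) * ln e :> at_bot"
    by (intro filterlim_tendsto_pos_mult_at_bot[OF _ _ ln_at_0]) auto
  then have "((\<lambda>e. exp ((1 - ln (lam e) / ln e) * ln e)) \<longlongrightarrow> 0) (at_right 0)"
    by (rule filterlim_compose[OF exp_at_bot])
  moreover have "\<forall>\<^sub>F e in at_right 0. exp ((1 - ln (lam e) / ln e) * ln e) = e / lam e"
  proof -
    have "\<forall>\<^sub>F e in at_right (0::real). 0 < e \<and> e < 1"
      by (simp add: eventually_at_right_field) (rule exI[of _ 1], auto)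
    then show ?thesis
    proof (rule eventually_mono)
      fix e :: real assume e: "0 < e \<and> e < 1"
      then have "ln e \<noteq> 0" "lam e > 0" using assms(1) by auto
      then have "(1 - ln (lam e) / ln e) * ln e = ln e - ln (lam e)"
        by (simp add: field_simps)
      then show "exp ((1 - ln (lam e) / ln e) * ln e) = e / lam e"
        using e \<open>lam e > 0\<close> by (simp add: exp_diff)
    qed
  qed
  ultimately show ?thesis by (rule Lim_transform_eventually)
qed

lemma pointwise:
  fixes e lam C0 C2 C3 L rho mu s sq xm xp a b al be ga de k x :: real
  assumes e: "0 < e" "e \<le> 1" and lam: "lam > 0" and C: "C0 > 0" "C2 > 0" "C3 > 0"
    and L: "L = exp (2*C0*lam)"
    and rho: "rho = L * (C2 + C3*e) * (e / lam)"
    and mu: "mu = 2*C0 - C3 * (e*(e/lam)) * (L + 1)"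
    and sq: "sq = sqrt (mu^2 - 4*rho^2)"
    and s: "s = mu + sq"
    and disc: "mu^2 - 4*rho^2 \<ge> 0" and mupos: "mu > 0"
    and small: "e^2*C3 + lam*(s/2) < 1"
    and xm: "xm = exp (2*C0) * (2*rho/s)" and xp: "xp = exp (-2*C0) * (s/(2*rho))"
    and k: "k > 0" "\<bar>ln k\<bar> \<le> C0"
    and ab: "a + \<bar>b\<bar> \<le> C2"
    and ent: "\<bar>al\<bar> \<le> C3" "\<bar>be\<bar> \<le> C3" "\<bar>ga\<bar> \<le> C3" "\<bar>de\<bar> \<le> C3"
    and x: "xm \<le> x" "x \<le> xp"
  shows "Qact a b al be ga de e (Dact k x) \<le> ereal (L * Dact k x)"
proof -
  have L1: "L \<ge> 1 + 2*C0*lam" unfolding L by (rule exp_ge_add_one_self)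
  have Lpos: "L > 0" unfolding L by simp
  have rhopos: "rho > 0" unfolding rho using e lam C Lpos by (intro mult_pos_pos add_pos_pos) auto
  have sq0: "sq \<ge> 0" and sq2: "sq^2 = mu^2 - 4*rho^2" using disc sq by auto
  have spos: "s > 0" using s sq0 mupos by linarith
  define K where "K = k^2"
  define y where "y = K * x"
  have K: "K = exp (2 * ln k)"
  proof -
    have "exp (2 * ln k) = exp (ln (k^2))" using k by (simp only: ln_realpow) simp
    also have "\<dots> = k^2" using k by simp
    finally show ?thesis unfolding K_def by simp
  qed
  have Klo: "exp (-2*C0) \<le> K" unfolding K using k(2) by (simp add: abs_le_iff)
  have Khi: "K \<le> exp (2*C0)" unfolding K using k(2) by (simp add: abs_le_iff)
  have Kpos: "K > 0" unfolding K_def using k by simp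
  have xmpos: "xm > 0" unfolding xm using rhopos spos by simp
  have xpos: "x > 0" using xmpos x by linarith
  have rm: "2*rho/s \<le> y"
  proof -
    have "2*rho/s = exp (-2*C0) * xm" unfolding xm by (simp add: exp_minus field_simps)
    also have "\<dots> \<le> K * xm" using Klo xmpos by (intro mult_right_mono) auto
    also have "\<dots> \<le> K * x" using Kpos x by simp
    finally show ?thesis unfolding y_def .
  qed
  have rp: "y \<le> s/(2*rho)"
  proof -
    have "y \<le> K * xp" unfolding y_def using Kpos x by simp
    also have "\<dots> \<le> exp (2*C0) * xp" using Khi xp rhopos spos by (intro mult_right_mono) auto
    also have "\<dots> = s/(2*rho)" unfolding xp by (simp add: exp_minus field_simps)
    finally show ?thesis .
  qed
  have ypos: "y > 0" unfolding y_def using Kpos xpos by simp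
  have fact_mu: "s/2 + 2*rho^2/s = mu"
  proof -
    have "s^2 + 4*rho^2 = 2*mu* s" unfolding s using sq2 by (simp add: power2_eq_square algebra_simps)
    then show ?thesis using spos by (simp add: field_simps power2_eq_square)
  qed
  have quad: "rho*y^2 - mu*y + rho \<le> 0"
  proof -
    have "rho*(y - s/(2*rho))*(y - 2*rho/s) = rho*y^2 - (s/2 + 2*rho^2/s)*y + rho"
      using rhopos spos by (simp add: field_simps power2_eq_square)
    then have "rho*y^2 - mu*y + rho = rho*(y - s/(2*rho))*(y - 2*rho/s)"
      using fact_mu by simp
    also have "\<dots> \<le> 0" using rm rp rhopos
      by (intro mult_nonneg_nonpos2 mult_nonneg_nonpos) auto
    finally show ?thesis .
  qed
  have quad2: "L*(C2+C3*e)*e*y^2 + L*(C2+C3*e)*e \<le> (2*C0*lam - C3*e^2*(L+1)) * y"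
  proof -
    have "lam * (rho*y^2 - mu*y + rho) \<le> 0" using quad lam by (simp add: mult_nonneg_nonpos)
    moreover have "lam * (rho*y^2 - mu*y + rho) = L*(C2+C3*e)*e*y^2 + L*(C2+C3*e)*e - (2*C0*lam - C3*e^2*(L+1)) * y"
      unfolding rho mu using lam by (simp add: field_simps power2_eq_square)
    ultimately show ?thesis by linarith
  qed
  have abu: "a + b + e*ga \<le> C2 + C3*e" "a - b - e*be \<le> C2 + C3*e"
  proof -
    have "e*ga \<le> e*C3" using ent e by (intro mult_left_mono) (auto simp: abs_le_iff)
    moreover have "e*(-be) \<le> e*C3" using ent e by (intro mult_left_mono) (auto simp: abs_le_iff)
    ultimately have "e*ga \<le> e*C3" "- (e*be) \<le> e*C3" by auto
    then show "a + b + e*ga \<le> C2 + C3*e" "a - b - e*be \<le> C2 + C3*e" using ab by (auto simp: abs_le_iff algebra_simps)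
  qed
  have h1: "L*(a+b+e*ga)*e*y^2 \<le> L*(C2+C3*e)*e*y^2"
    using abu(1) Lpos e by (intro mult_right_mono) auto
  have h2: "(a-b-e*be)*e \<le> L*(C2+C3*e)*e"
  proof -
    have "(a-b-e*be)*e \<le> (C2+C3*e)*e" using abu(2) e by (intro mult_right_mono) auto
    also have "\<dots> \<le> L*((C2+C3*e)*e)"
    proof -
      have "L \<ge> 1" using L1 C lam by (smt (verit) mult_pos_pos)
      moreover have "(C2+C3*e)*e \<ge> 0" using C e by simp
      ultimately show ?thesis using mult_right_mono[of 1 L "(C2+C3*e)*e"] by simp
    qed
    finally show ?thesis by (simp add: mult.assoc)
  qed
  have h3: "(2*C0*lam - C3*e^2*(L+1)) * y \<le> y * (L - 1 + e^2*(L*de - al))"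
  proof -
    have "L*(-de) \<le> L*C3" using ent Lpos by (intro mult_left_mono) auto
    then have "- (C3*(L+1)) \<le> L*de - al" using ent by (auto simp: abs_le_iff algebra_simps)
    then have "e^2*(- (C3*(L+1))) \<le> e^2*(L*de - al)" by (intro mult_left_mono) auto
    then have "2*C0*lam - C3*e^2*(L+1) \<le> L - 1 + e^2*(L*de - al)" using L1 by (simp add: algebra_simps)
    then show ?thesis using ypos by (simp add: mult.commute mult_right_mono)
  qed
  define D where "D = 1 + e^2*de - (a+b+e*ga)*e*y"
  have Dpos: "D > 0"
  proof -
    have "(a+b+e*ga)*e*y \<le> (C2+C3*e)*e*y" using abu(1) e ypos by (intro mult_right_mono) auto
    also have "\<dots> \<le> L*((C2+C3*e)*e*y)"
    proof -
      have "L \<ge> 1" using L1 C lam by (smt (verit) mult_pos_pos)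
      moreover have "(C2+C3*e)*e*y \<ge> 0" using C e ypos by simp
      ultimately show ?thesis using mult_right_mono[of 1 L "(C2+C3*e)*e*y"] by simp
    qed
    also have "\<dots> = lam*rho*y" unfolding rho using lam by simp
    also have "\<dots> \<le> lam*rho*(s/(2*rho))" using rp lam rhopos by (intro mult_left_mono) auto
    also have "\<dots> = lam*(s/2)" using rhopos by simp
    finally have A: "(a+b+e*ga)*e*y \<le> lam*(s/2)" .
    have "e^2*(-de) \<le> e^2*C3" using ent by (intro mult_left_mono) auto
    then have "1 + e^2*de \<ge> 1 - e^2*C3" by (simp add: algebra_simps)
    then show ?thesis unfolding D_def using A small by (simp add: algebra_simps)
  qed
  have iden: "L*y*D - ((1 + e^2*al)*y + (a-b-e*be)*e) =
     y*(L - 1 + e^2*(L*de - al)) - L*(a+b+e*ga)*e*y^2 - (a-b-e*be)*e"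
    unfolding D_def by (simp add: algebra_simps power2_eq_square)
  have main: "(1 + e^2*al)*y + (a-b-e*be)*e \<le> L*y*D"
    using iden h1 h2 h3 quad2 by linarith
  have y': "Dact k x = y" unfolding Dact_def y_def K_def ..
  have "Qact a b al be ga de e (Dact k x) = ereal (((1 + e^2*al)*y + (a-b-e*be)*e) / D)"
    unfolding y' Qact_def mobius_def D_def using Dpos[unfolded D_def]
    by (simp add: algebra_simps)
  also have "\<dots> \<le> ereal (L * Dact k x)" unfolding y' using main Dpos
    by (simp add: pos_divide_le_eq mult.commute mult.left_commute)
  finally show ?thesis .
qed

theorem lemma6:
  fixes C0 C2 C3 :: real and lam :: "real \<Rightarrow> real"
  assumes "C0 > 0" "C2 > 0" "C3 > 0"
    and "\<forall>e>0. lam e > 0"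
    and "(lam \<longlongrightarrow> 0) (at_right 0)"
    and "((\<lambda>e. ln (lam e) / ln e) \<longlongrightarrow> 0) (at_right 0)"
  shows "\<exists>xm xp :: real \<Rightarrow> real.
     ((\<lambda>e. lam e * xm e / e) \<longlongrightarrow> C2 * exp (2 * C0) / (2 * C0)) (at_right 0) \<and>
     ((\<lambda>e. e * xp e / lam e) \<longlongrightarrow> 2 * C0 / (C2 * exp (2 * C0))) (at_right 0) \<and>
     (\<forall>(C1::real) (a::'s \<Rightarrow> real) (b::'s \<Rightarrow> real) (\<kappa>::'s \<Rightarrow> real)
        (\<alpha>::'s \<Rightarrow> real \<Rightarrow> real) (\<beta>::'s \<Rightarrow> real \<Rightarrow> real)
        (\<gamma>::'s \<Rightarrow> real \<Rightarrow> real) (\<delta>::'s \<Rightarrow> real \<Rightarrow> real).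
        C1 > 0 \<and>
        (\<forall>\<sigma>. \<kappa> \<sigma> > 0 \<and> \<bar>ln (\<kappa> \<sigma>)\<bar> \<le> C0 \<and> a \<sigma> - \<bar>b \<sigma>\<bar> \<ge> C1 \<and> a \<sigma> + \<bar>b \<sigma>\<bar> \<le> C2 \<and>
             (\<forall>e. \<bar>e\<bar> \<le> 1 \<longrightarrow> mnorm (mat2 (\<alpha> \<sigma> e) (\<beta> \<sigma> e) (\<gamma> \<sigma> e) (\<delta> \<sigma> e)) \<le> C3))
        \<longrightarrow>
        (\<forall>\<^sub>F e in at_right 0. 0 < xm e \<and> xm e < xp e \<and>
           (\<forall>\<sigma> x. xm e \<le> x \<and> x \<le> xp e \<longrightarrow>
              Qact (a \<sigma>) (b \<sigma>) (\<alpha> \<sigma> e) (\<beta> \<sigma> e) (\<gamma> \<sigma> e) (\<delta> \<sigma> e) e (Dact (\<kappa> \<sigma>) x)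
                \<le> ereal (exp (2 * C0 * lam e) * Dact (\<kappa> \<sigma>) x))))"
proof -
  note C = assms(1,2,3)
  note lampos = assms(4)
  define L where "L e = exp (2*C0*lam e)" for e
  define rho where "rho e = L e * (C2 + C3*e) * (e / lam e)" for e
  define mu where "mu e = 2*C0 - C3 * (e*(e/lam e)) * (L e + 1)" for e
  define sq where "sq e = sqrt (mu e^2 - 4*rho e^2)" for e
  define s where "s e = mu e + sq e" for e
  define xm where "xm e = exp (2*C0) * (2*rho e/s e)" for e
  define xp where "xp e = exp (-2*C0) * (s e/(2*rho e))" for e
  have q: "((\<lambda>e. e / lam e) \<longlongrightarrow> 0) (at_right 0)" by (rule e_over_lam[OF assms(4,6)])
  have id0: "((\<lambda>e::real. e) \<longlongrightarrow> 0) (at_right 0)" by (rule tendsto_ident_at)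
  have Llim: "(L \<longlongrightarrow> 1) (at_right 0)"
  proof -
    have "((\<lambda>e. exp (2*C0*lam e)) \<longlongrightarrow> exp (2*C0*0)) (at_right 0)"
      by (intro tendsto_intros assms(5))
    then show ?thesis unfolding L_def by simp
  qed
  have rholim: "(rho \<longlongrightarrow> 0) (at_right 0)"
  proof -
    have "((\<lambda>e. L e * (C2 + C3*e) * (e / lam e)) \<longlongrightarrow> 1 * (C2 + C3*0) * 0) (at_right 0)"
      by (intro tendsto_intros Llim q id0)
    then show ?thesis unfolding rho_def by simp
  qed
  have mulim: "(mu \<longlongrightarrow> 2*C0) (at_right 0)"
  proof -
    have "((\<lambda>e. 2*C0 - C3 * (e*(e/lam e)) * (L e + 1)) \<longlongrightarrow> 2*C0 - C3*(0*0)*(1+1)) (at_right 0)"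
      by (intro tendsto_intros Llim q id0)
    then show ?thesis unfolding mu_def by simp
  qed
  have disclim: "((\<lambda>e. mu e^2 - 4*rho e^2) \<longlongrightarrow> (2*C0)^2 - 4*0^2) (at_right 0)"
    by (intro tendsto_intros mulim rholim)
  have sqlim: "(sq \<longlongrightarrow> 2*C0) (at_right 0)"
  proof -
    have "(sq \<longlongrightarrow> sqrt ((2*C0)^2 - 4*0^2)) (at_right 0)"
      unfolding sq_def by (intro tendsto_intros disclim)
    moreover have "sqrt ((2*C0)^2 - 4*0^2) = 2*C0"
    proof -
      have "(2*C0)^2 - 4*0^2 = (2*C0)^2" by simp
      then have "sqrt ((2*C0)^2 - 4*0^2) = \<bar>2*C0\<bar>" by (simp only: real_sqrt_abs)
      then show ?thesis using C by simp
    qed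
    ultimately show ?thesis by simp
  qed
  have slim: "(s \<longlongrightarrow> 4*C0) (at_right 0)"
  proof -
    have "(s \<longlongrightarrow> 2*C0 + 2*C0) (at_right 0)" unfolding s_def by (intro tendsto_intros mulim sqlim)
    then show ?thesis by simp
  qed
  have ev0: "\<forall>\<^sub>F e in at_right (0::real). 0 < e \<and> e < 1"
    by (simp add: eventually_at_right_field) (rule exI[of _ 1], auto)
  have evdisc: "\<forall>\<^sub>F e in at_right 0. mu e^2 - 4*rho e^2 > 0"
    using order_tendstoD(1)[OF disclim, of 0] C by simp
  have evmu: "\<forall>\<^sub>F e in at_right 0. mu e > 0"
    using order_tendstoD(1)[OF mulim, of 0] C by simp
  have evsmall: "\<forall>\<^sub>F e in at_right 0. e^2*C3 + lam e*(s e/2) < 1"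
  proof -
    have "((\<lambda>e. e^2*C3 + lam e*(s e/2)) \<longlongrightarrow> 0^2*C3 + 0*(4*C0/2)) (at_right 0)"
      by (intro tendsto_intros id0 assms(5) slim) auto
    from order_tendstoD(2)[OF this, of 1] show ?thesis by simp
  qed
  have evord: "\<forall>\<^sub>F e in at_right 0. s e^2 - exp (4*C0)*4*rho e^2 > 0"
  proof -
    have "((\<lambda>e. s e^2 - exp (4*C0)*4*rho e^2) \<longlongrightarrow> (4*C0)^2 - exp (4*C0)*4*0^2) (at_right 0)"
      by (intro tendsto_intros slim rholim)
    from order_tendstoD(1)[OF this, of 0] show ?thesis using C by simp
  qed
  have evall: "\<forall>\<^sub>F e in at_right 0. (0 < e \<and> e < 1) \<and> mu e^2 - 4*rho e^2 > 0 \<and> mu e > 0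
      \<and> e^2*C3 + lam e*(s e/2) < 1 \<and> s e^2 - exp (4*C0)*4*rho e^2 > 0"
    using ev0 evdisc evmu evsmall evord by eventually_elim auto
  have lim1: "((\<lambda>e. lam e * xm e / e) \<longlongrightarrow> C2 * exp (2 * C0) / (2 * C0)) (at_right 0)"
  proof -
    have "((\<lambda>e. exp (2*C0) * (2*(L e * (C2 + C3*e)) / s e)) \<longlongrightarrow> exp (2*C0) * (2*(1 * (C2 + C3*0)) / (4*C0))) (at_right 0)"
      using C by (intro tendsto_intros Llim slim id0) auto
    then have "((\<lambda>e. exp (2*C0) * (2*(L e * (C2 + C3*e)) / s e)) \<longlongrightarrow> C2 * exp (2 * C0) / (2 * C0)) (at_right 0)"
      using C by (simp add: mult.commute)
    moreover have "\<forall>\<^sub>F e in at_right 0. exp (2*C0) * (2*(L e * (C2 + C3*e)) / s e) = lam e * xm e / e"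
      using ev0 proof (rule eventually_mono)
      fix e :: real assume "0 < e \<and> e < 1"
      then have "e > 0" "lam e > 0" using lampos by auto
      then show "exp (2*C0) * (2*(L e * (C2 + C3*e)) / s e) = lam e * xm e / e"
        unfolding xm_def rho_def by (cases "s e = 0") (simp_all add: field_simps)
    qed
    ultimately show ?thesis by (rule Lim_transform_eventually)
  qed
  have lim2: "((\<lambda>e. e * xp e / lam e) \<longlongrightarrow> 2 * C0 / (C2 * exp (2 * C0))) (at_right 0)"
  proof -
    have "((\<lambda>e. exp (-2*C0) * (s e / (2*(L e * (C2 + C3*e))))) \<longlongrightarrow> exp (-2*C0) * (4*C0 / (2*(1 * (C2 + C3*0))))) (at_right 0)"
      using C by (intro tendsto_intros Llim slim id0) auto
    then have "((\<lambda>e. exp (-2*C0) * (s e / (2*(L e * (C2 + C3*e))))) \<longlongrightarrow> 2 * C0 / (C2 * exp (2 * C0))) (at_right 0)"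
      using C by (simp add: exp_minus field_simps)
    moreover have "\<forall>\<^sub>F e in at_right 0. exp (-2*C0) * (s e / (2*(L e * (C2 + C3*e)))) = e * xp e / lam e"
      using ev0 proof (rule eventually_mono)
      fix e :: real assume "0 < e \<and> e < 1"
      then have "e > 0" "lam e > 0" using lampos by auto
      moreover have "L e > 0" unfolding L_def by simp
      moreover have "C2 + C3*e > 0" using C \<open>e > 0\<close> by (simp add: add_pos_pos)
      ultimately have "L e * (C2 + C3*e) > 0" by simp
      define P where "P = L e * (C2 + C3*e)"
      have Pp: "P > 0" "rho e = P * (e / lam e)" unfolding P_def rho_def using \<open>L e * (C2 + C3*e) > 0\<close> by auto
      show "exp (-2*C0) * (s e / (2*(L e * (C2 + C3*e)))) = e * xp e / lam e"
        unfolding xp_def Pp(2) P_def[symmetric] using Pp(1) \<open>e > 0\<close> \<open>lam e > 0\<close> by (simp add: field_simps)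
    qed
    ultimately show ?thesis by (rule Lim_transform_eventually)
  qed
  show ?thesis
  proof (intro exI conjI allI impI)
    show "((\<lambda>e. lam e * xm e / e) \<longlongrightarrow> C2 * exp (2 * C0) / (2 * C0)) (at_right 0)" by (rule lim1)
    show "((\<lambda>e. e * xp e / lam e) \<longlongrightarrow> 2 * C0 / (C2 * exp (2 * C0))) (at_right 0)" by (rule lim2)
    fix C1 :: real and a b \<kappa> :: "'s \<Rightarrow> real" and \<alpha> \<beta> \<gamma> \<delta> :: "'s \<Rightarrow> real \<Rightarrow> real"
    assume H: "C1 > 0 \<and>
        (\<forall>\<sigma>. \<kappa> \<sigma> > 0 \<and> \<bar>ln (\<kappa> \<sigma>)\<bar> \<le> C0 \<and> a \<sigma> - \<bar>b \<sigma>\<bar> \<ge> C1 \<and> a \<sigma> + \<bar>b \<sigma>\<bar> \<le> C2 \<and>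
             (\<forall>e. \<bar>e\<bar> \<le> 1 \<longrightarrow> mnorm (mat2 (\<alpha> \<sigma> e) (\<beta> \<sigma> e) (\<gamma> \<sigma> e) (\<delta> \<sigma> e)) \<le> C3))"
    show "\<forall>\<^sub>F e in at_right 0. 0 < xm e \<and> xm e < xp e \<and>
           (\<forall>\<sigma> x. xm e \<le> x \<and> x \<le> xp e \<longrightarrow>
              Qact (a \<sigma>) (b \<sigma>) (\<alpha> \<sigma> e) (\<beta> \<sigma> e) (\<gamma> \<sigma> e) (\<delta> \<sigma> e) e (Dact (\<kappa> \<sigma>) x)
                \<le> ereal (exp (2 * C0 * lam e) * Dact (\<kappa> \<sigma>) x))"
      using evall
    proof (rule eventually_mono)
      fix e :: real
      assume E: "(0 < e \<and> e < 1) \<and> mu e^2 - 4*rho e^2 > 0 \<and> mu e > 0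
      \<and> e^2*C3 + lam e*(s e/2) < 1 \<and> s e^2 - exp (4*C0)*4*rho e^2 > 0"
      have lame: "lam e > 0" using E lampos by auto
      have Le: "L e > 0" unfolding L_def by simp
      have rhoe: "rho e > 0" unfolding rho_def using E lame Le C
        by (intro mult_pos_pos add_pos_pos) auto
      have se: "s e > 0" unfolding s_def sq_def using E by (smt (verit) real_sqrt_ge_zero)
      show "0 < xm e \<and> xm e < xp e \<and>
           (\<forall>\<sigma> x. xm e \<le> x \<and> x \<le> xp e \<longrightarrow>
              Qact (a \<sigma>) (b \<sigma>) (\<alpha> \<sigma> e) (\<beta> \<sigma> e) (\<gamma> \<sigma> e) (\<delta> \<sigma> e) e (Dact (\<kappa> \<sigma>) x)
                \<le> ereal (exp (2 * C0 * lam e) * Dact (\<kappa> \<sigma>) x))"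
      proof (intro conjI allI impI)
        show "0 < xm e" unfolding xm_def using rhoe se by simp
        show "xm e < xp e"
        proof -
          have "exp (4*C0) = exp (2*C0) * exp (2*C0)" by (simp flip: exp_add)
          then have "exp (2*C0) * exp (2*C0) * 4 * rho e^2 < s e^2" using E by simp
          then have "exp (2*C0) * (2*rho e) * (exp (2*C0) * (2*rho e)) < s e * s e"
            by (simp add: power2_eq_square algebra_simps)
          then show ?thesis unfolding xm_def xp_def using rhoe se
            by (simp add: exp_minus field_simps power2_eq_square)
        qed
        fix \<sigma> x assume x: "xm e \<le> x \<and> x \<le> xp e"
        have Hs: "\<kappa> \<sigma> > 0" "\<bar>ln (\<kappa> \<sigma>)\<bar> \<le> C0" "a \<sigma> + \<bar>b \<sigma>\<bar> \<le> C2"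
          "mnorm (mat2 (\<alpha> \<sigma> e) (\<beta> \<sigma> e) (\<gamma> \<sigma> e) (\<delta> \<sigma> e)) \<le> C3"
          using H E by auto
        show "Qact (a \<sigma>) (b \<sigma>) (\<alpha> \<sigma> e) (\<beta> \<sigma> e) (\<gamma> \<sigma> e) (\<delta> \<sigma> e) e (Dact (\<kappa> \<sigma>) x)
                \<le> ereal (exp (2 * C0 * lam e) * Dact (\<kappa> \<sigma>) x)"
        proof -
          note me = mat2_entries[where p="\<alpha> \<sigma> e" and q="\<beta> \<sigma> e" and r="\<gamma> \<sigma> e" and s="\<delta> \<sigma> e"]
          have ent: "\<bar>\<alpha> \<sigma> e\<bar> \<le> C3" "\<bar>\<beta> \<sigma> e\<bar> \<le> C3" "\<bar>\<gamma> \<sigma> e\<bar> \<le> C3" "\<bar>\<delta> \<sigma> e\<bar> \<le> C3"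
            using me Hs(4) by linarith+
          have "Qact (a \<sigma>) (b \<sigma>) (\<alpha> \<sigma> e) (\<beta> \<sigma> e) (\<gamma> \<sigma> e) (\<delta> \<sigma> e) e (Dact (\<kappa> \<sigma>) x)
                \<le> ereal (L e * Dact (\<kappa> \<sigma>) x)"
          proof (rule pointwise[of e "lam e" C0 C2 C3 "L e" "rho e" "mu e" "sq e" "s e" "xm e" "xp e"
              "\<kappa> \<sigma>" "a \<sigma>" "b \<sigma>" "\<alpha> \<sigma> e" "\<beta> \<sigma> e" "\<gamma> \<sigma> e" "\<delta> \<sigma> e" x])
          qed (use E lame C Hs x ent in \<open>simp_all add: L_def rho_def mu_def sq_def s_def xm_def xp_def\<close>)
          then show ?thesis by (simp add: L_def)
        qed
      qed
    qed
  qed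
qed

end
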